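(* Consider $\mathrm{USD}_p$ with $p\in[0,1]$ and let $\xi>0$ be a constant. Let $\Phi_{up}(t) := u(t) - x_1(t) - x_2(t)$ and $T_u := \inf\{t \geq 0 : \Phi_{up}(t) > 6\xi\sqrt{n\log n}\}$. Let $\mathbf{x}(0)$ be an arbitrary configuration with $\Phi_{up}(0) < 2\xi\sqrt{n\log n}$. Then with high probability $T_u = \omega(n\log^2 n)$.
   Context: Population protocol with $n$ agents, each in a state from $\{1,2,\bot\}$ (Opinion 1, Opinion 2, undecided). At each time step a scheduler picks an ordered pair $(i,j)$ of agents uniformly at random, independently of the past; only the initiator $i$ changes state. In $\mathrm{USD}_p$: if the initiator is $2$ and the responder $1$, the initiator becomes $\bot$; if the initiator is $1$ and the responder $2$, the initiator becomes $\bot$ with probability $1-p$ and otherwise stays $1$; if the initiator is $\bot$, it adopts the responder's state; otherwise nothing changes. $x_1(t),x_2(t),u(t)$ are the numbers of agents in states $1,2,\bot$ after $t$ interactions. "With high probability" means with probability at least $1-n^{-c}$ for a constant $c>0$. *)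

theory Defs
  imports "HOL-Probability.Probability"
begin

datatype st = One | Two | Und

text \<open>Local transition of the initiator in USD_p, given initiator state a and responder state b.\<close>
definition usd_delta :: "real \<Rightarrow> st \<Rightarrow> st \<Rightarrow> st pmf" where
  "usd_delta p a b = (case (a, b) of
      (Two, One) \<Rightarrow> return_pmf Und
    | (One, Two) \<Rightarrow> map_pmf (\<lambda>keep. if keep then One else Und) (bernoulli_pmf p)
    | (Und, c) \<Rightarrow> return_pmf c
    | _ \<Rightarrow> return_pmf a)"

text \<open>Configurations of n agents 0..n-1: functions nat => st (values at i >= n are irrelevant).
  One interaction: an ordered pair of distinct agents is chosen uniformly at random.\<close>
definition usd_step :: "real \<Rightarrow> nat \<Rightarrow> (nat \<Rightarrow> st) \<Rightarrow> (nat \<Rightarrow> st) pmf" where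
  "usd_step p n x = do {
      ij \<leftarrow> pmf_of_set {(i, j). i < n \<and> j < n \<and> i \<noteq> j};
      s \<leftarrow> usd_delta p (x (fst ij)) (x (snd ij));
      return_pmf (x(fst ij := s))
   }"

definition cnt :: "nat \<Rightarrow> (nat \<Rightarrow> st) \<Rightarrow> st \<Rightarrow> nat" where
  "cnt n x s = card {i. i < n \<and> x i = s}"

definition phi_up :: "nat \<Rightarrow> (nat \<Rightarrow> st) \<Rightarrow> real" where
  "phi_up n x = real (cnt n x Und) - real (cnt n x One) - real (cnt n x Two)"

text \<open>stay p n A m x = probability that the chain started in x satisfies x(t) \<in> A for all t < m.\<close>
fun stay :: "real \<Rightarrow> nat \<Rightarrow> (nat \<Rightarrow> st) set \<Rightarrow> nat \<Rightarrow> (nat \<Rightarrow> st) \<Rightarrow> real" where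
  "stay p n A 0 x = 1"
| "stay p n A (Suc m) x =
     (if x \<in> A then measure_pmf.expectation (usd_step p n x) (stay p n A m) else 0)"

end

theory Submission
  imports Defs "HOL-Real_Asymp.Real_Asymp"
begin


lemma UNIV_st: "(UNIV :: st set) = {One, Two, Und}"
  using st.exhaust by auto

lemma finite_st[simp]: "finite (UNIV :: st set)"
  by (simp add: UNIV_st)

definition dexp :: "real \<Rightarrow> st \<Rightarrow> st \<Rightarrow> (st \<Rightarrow> real) \<Rightarrow> real" where
  "dexp p a b g = (case (a, b) of
      (Two, One) \<Rightarrow> g Und
    | (One, Two) \<Rightarrow> p * g One + (1 - p) * g Und
    | (Und, c) \<Rightarrow> g c
    | _ \<Rightarrow> g a)"

lemma exp_delta:
  assumes "0 \<le> p" "p \<le> 1"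
  shows "measure_pmf.expectation (usd_delta p a b) g = dexp p a b g"
  using assms by (cases a; cases b) (simp_all add: usd_delta_def dexp_def)

definition P :: "nat \<Rightarrow> (nat \<times> nat) set" where
  "P n = {(i, j). i < n \<and> j < n \<and> i \<noteq> j}"

lemma finite_P: "finite (P n)"
  unfolding P_def by (rule finite_subset[of _ "{..<n} \<times> {..<n}"]) auto

lemma P_ne: "n \<ge> 2 \<Longrightarrow> P n \<noteq> {}"
proof -
  assume "n \<ge> 2" then have "(0,1) \<in> P n" unfolding P_def by auto
  then show ?thesis by blast
qed

lemma exp_step:
  assumes "0 \<le> p" "p \<le> 1" "n \<ge> 2"
  shows "measure_pmf.expectation (usd_step p n x) f =
    (\<Sum>ij\<in>P n. dexp p (x (fst ij)) (x (snd ij)) (\<lambda>s. f (x(fst ij := s)))) / real (card (P n))"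
proof -
  have e: "usd_step p n x = pmf_of_set (P n) \<bind> (\<lambda>ij. map_pmf (\<lambda>s. x(fst ij := s)) (usd_delta p (x (fst ij)) (x (snd ij))))"
    unfolding usd_step_def P_def map_pmf_def by simp
  show ?thesis
    unfolding e
    apply (subst pmf_expectation_bind_pmf_of_set)
    using assms finite_P P_ne
    by (auto simp: exp_delta divide_inverse_commute sum_distrib_left intro: finite_subset[OF _ finite_st])
qed

fun val :: "st \<Rightarrow> real" where
  "val Und = 1" | "val One = -1" | "val Two = -1"

lemma cnt_sum: "real (cnt n x s) = (\<Sum>k<n. if x k = s then 1 else 0)"
proof -
  have "(\<Sum>k<n. if x k = s then (1::real) else 0) = real (card ({..<n} \<inter> {k. x k = s}))"
    by (simp add: sum.If_cases)
  moreover have "{..<n} \<inter> {k. x k = s} = {i. i < n \<and> x i = s}" by auto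
  ultimately show ?thesis by (simp add: cnt_def)
qed

lemma val_ind: "val s = (if s = Und then 1 else 0) - (if s = One then 1 else 0) - (if s = Two then 1 else 0)"
  by (cases s) auto

lemma phi_sum: "phi_up n x = (\<Sum>k<n. val (x k))"
  unfolding phi_up_def cnt_sum val_ind by (simp add: sum_subtractf)

lemma cnt_total: "real (cnt n x Und) + real (cnt n x One) + real (cnt n x Two) = real n"
proof -
  have "\<And>s. (if s = Und then 1 else 0) + (if s = One then 1 else 0) + (if s = Two then 1 else (0::real)) = 1"
    by (case_tac s) auto
  then have "(\<Sum>k<n. (if x k = Und then 1 else 0) + (if x k = One then 1 else 0) + (if x k = Two then 1 else (0::real))) = real n"
    by simp
  then show ?thesis unfolding cnt_sum by (simp add: sum.distrib)
qed

lemma phi_upd: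
  assumes "i < n"
  shows "phi_up n (x(i := s)) = phi_up n x - val (x i) + val s"
proof -
  have a: "(\<Sum>k<n. val ((x(i:=s)) k)) = val s + (\<Sum>k\<in>{..<n} - {i}. val ((x(i:=s)) k))"
    using assms by (subst sum.remove[of _ i]) auto
  have b: "(\<Sum>k<n. val (x k)) = val (x i) + (\<Sum>k\<in>{..<n} - {i}. val (x k))"
    using assms by (subst sum.remove[of _ i]) auto
  have c: "(\<Sum>k\<in>{..<n} - {i}. val ((x(i:=s)) k)) = (\<Sum>k\<in>{..<n} - {i}. val (x k))"
    by (rule sum.cong) auto
  show ?thesis unfolding phi_sum using a b c by simp
qed

definition W :: "nat \<Rightarrow> real \<Rightarrow> (nat \<Rightarrow> st) \<Rightarrow> real" where
  "W n H x = 2 powr ((phi_up n x - H) / 2)"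

definition hh :: "real \<Rightarrow> st \<Rightarrow> st \<Rightarrow> real" where
  "hh p a b = 1 + (if a = Two \<and> b = One then 1 else 0) + (1 - p) * (if a = One \<and> b = Two then 1 else 0)
     - (1/2) * (if a = Und \<and> b \<noteq> Und then 1 else 0)"

lemma W_upd:
  assumes "i < n"
  shows "W n H (x(i := s)) = W n H x * 2 powr ((val s - val (x i)) / 2)"
  unfolding W_def phi_upd[OF assms] powr_add[symmetric]
  by (rule arg_cong[where f="(powr) 2"]) (simp add: field_simps)

lemma dexp_W:
  assumes "i < n"
  shows "dexp p (x i) b (\<lambda>s. W n H (x(i := s))) = W n H x * hh p (x i) b"
  unfolding W_upd[OF assms]
  by (cases "x i"; cases b) (simp_all add: dexp_def hh_def powr_minus algebra_simps)

lemma pair_count: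
  assumes "Sa \<inter> Sb = {}"
  shows "(\<Sum>ij\<in>P n. if x (fst ij) \<in> Sa \<and> x (snd ij) \<in> Sb then 1 else (0::real))
     = real (card {i. i < n \<and> x i \<in> Sa}) * real (card {j. j < n \<and> x j \<in> Sb})"
proof -
  have "(\<Sum>ij\<in>P n. if x (fst ij) \<in> Sa \<and> x (snd ij) \<in> Sb then 1 else (0::real))
      = real (card (P n \<inter> {ij. x (fst ij) \<in> Sa \<and> x (snd ij) \<in> Sb}))"
    using finite_P by (simp add: sum.If_cases)
  moreover have "P n \<inter> {ij. x (fst ij) \<in> Sa \<and> x (snd ij) \<in> Sb} = {i. i < n \<and> x i \<in> Sa} \<times> {j. j < n \<and> x j \<in> Sb}"
    using assms unfolding P_def by auto
  ultimately show ?thesis by (simp add: card_cartesian_product)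
qed

lemma cnt_set: "cnt n x s = card {i. i < n \<and> x i \<in> {s}}"
  unfolding cnt_def by simp

lemma cnt_two: "card {i. i < n \<and> x i \<in> {One, Two}} = cnt n x One + cnt n x Two"
proof -
  have "{i. i < n \<and> x i \<in> {One, Two}} = {i. i < n \<and> x i = One} \<union> {i. i < n \<and> x i = Two}" by auto
  then show ?thesis unfolding cnt_def by (simp add: card_Un_disjoint disjoint_iff)
qed

lemma hh_sum:
  "(\<Sum>ij\<in>P n. hh p (x (fst ij)) (x (snd ij))) = real (card (P n))
     + real (cnt n x Two) * real (cnt n x One) + (1 - p) * (real (cnt n x One) * real (cnt n x Two))
     - (1/2) * (real (cnt n x Und) * (real (cnt n x One) + real (cnt n x Two)))"
proof -
  have e: "\<And>a b. hh p a b = 1 + (if a \<in> {Two} \<and> b \<in> {One} then 1 else 0) + (1 - p) * (if a \<in> {One} \<and> b \<in> {Two} then 1 else 0)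
     - (1/2) * (if a \<in> {Und} \<and> b \<in> {One, Two} then 1 else 0)"
    unfolding hh_def by (case_tac b) auto
  have c1: "(\<Sum>ij\<in>P n. if x (fst ij) \<in> {Two} \<and> x (snd ij) \<in> {One} then 1 else (0::real)) = real (cnt n x Two) * real (cnt n x One)"
    by (subst pair_count) (auto simp: cnt_set)
  have c2: "(\<Sum>ij\<in>P n. if x (fst ij) \<in> {One} \<and> x (snd ij) \<in> {Two} then 1 else (0::real)) = real (cnt n x One) * real (cnt n x Two)"
    by (subst pair_count) (auto simp: cnt_set)
  have c3: "(\<Sum>ij\<in>P n. if x (fst ij) \<in> {Und} \<and> x (snd ij) \<in> {One, Two} then 1 else (0::real)) = real (cnt n x Und) * (real (cnt n x One) + real (cnt n x Two))"
    using pair_count[where Sa="{Und}" and Sb="{One,Two}" and n=n and x=x] cnt_two[of n x] cnt_set[of n x Und] by simp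
  show ?thesis
    unfolding e using c1 c2 c3
    by (simp add: sum.distrib sum_subtractf sum_distrib_left[symmetric] sum_divide_distrib[symmetric])
qed

lemma hh_sum_le:
  assumes "0 \<le> p" "p \<le> 1" "phi_up n x \<ge> 0"
  shows "(\<Sum>ij\<in>P n. hh p (x (fst ij)) (x (snd ij))) \<le> real (card (P n))"
proof -
  define a where "a = real (cnt n x One)"
  define b where "b = real (cnt n x Two)"
  define u where "u = real (cnt n x Und)"
  have "u \<ge> a + b" using assms(3) unfolding phi_up_def a_def b_def u_def by simp
  moreover have "a \<ge> 0" "b \<ge> 0" unfolding a_def b_def by auto
  ultimately have "b * a + (1 - p) * (a * b) - (1/2) * (u * (a + b)) \<le> 0"
    using assms(1,2)
  proof -
    assume h: "u \<ge> a + b" "a \<ge> 0" "b \<ge> 0"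
    have "0 \<le> p * (a * b)" using assms(1) h by simp
    then have "(1 - p) * (a * b) \<le> a * b" by (simp add: algebra_simps)
    moreover have "2 * (a * b) \<le> (1/2) * ((a + b) * (a + b))"
    proof -
      have q: "(a+b)*(a+b) = (a-b)*(a-b) + 4*(a*b)" by (simp add: algebra_simps)
      have "0 \<le> (a-b)*(a-b)" by simp
      then show ?thesis unfolding q by simp
    qed
    moreover have "(a + b) * (a + b) \<le> u * (a + b)" using h by (simp add: mult_right_mono)
    ultimately show ?thesis by (simp add: algebra_simps)
  qed
  then show ?thesis unfolding hh_sum a_def b_def u_def by simp
qed

lemma hh_le2: "0 \<le> p \<Longrightarrow> hh p a b \<le> 2"
  unfolding hh_def by auto

lemma hh_sum_le2:
  assumes "0 \<le> p"
  shows "(\<Sum>ij\<in>P n. hh p (x (fst ij)) (x (snd ij))) \<le> 2 * real (card (P n))"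
proof -
  have "(\<Sum>ij\<in>P n. hh p (x (fst ij)) (x (snd ij))) \<le> (\<Sum>ij\<in>P n. 2)"
    by (rule sum_mono) (simp add: hh_le2 assms)
  then show ?thesis by simp
qed

lemma dexp_mono:
  assumes "0 \<le> p" "p \<le> 1" "\<And>s. g s \<le> g' s"
  shows "dexp p a b g \<le> dexp p a b g'"
proof -
  have "p * g One + (1 - p) * g Und \<le> p * g' One + (1 - p) * g' Und"
    using assms by (intro add_mono mult_left_mono) auto
  then show ?thesis using assms by (cases a; cases b) (simp_all add: dexp_def)
qed

lemma dexp_minus: "dexp p a b (\<lambda>s. c - g s) = c - dexp p a b g"
  by (cases a; cases b) (simp_all add: dexp_def algebra_simps)

lemma dexp_plus: "dexp p a b (\<lambda>s. g s + c) = dexp p a b g + c"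
  by (cases a; cases b) (simp_all add: dexp_def algebra_simps)

lemma step_W:
  assumes "0 \<le> p" "p \<le> 1" "n \<ge> 2"
  shows "(\<Sum>ij\<in>P n. dexp p (x (fst ij)) (x (snd ij)) (\<lambda>s. W n H (x(fst ij := s)))) / real (card (P n))
          \<le> W n H x + 2 powr (- H / 2)"
proof -
  have N: "real (card (P n)) > 0" using finite_P P_ne[OF assms(3)] by (simp add: card_gt_0_iff)
  have "(\<Sum>ij\<in>P n. dexp p (x (fst ij)) (x (snd ij)) (\<lambda>s. W n H (x(fst ij := s))))
      = (\<Sum>ij\<in>P n. W n H x * hh p (x (fst ij)) (x (snd ij)))"
    by (rule sum.cong) (auto simp: P_def dexp_W)
  also have "\<dots> = W n H x * (\<Sum>ij\<in>P n. hh p (x (fst ij)) (x (snd ij)))"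
    by (simp add: sum_distrib_left)
  also have "\<dots> \<le> (W n H x + 2 powr (- H / 2)) * real (card (P n))"
  proof (cases "phi_up n x \<ge> 0")
    case True
    have "W n H x * (\<Sum>ij\<in>P n. hh p (x (fst ij)) (x (snd ij))) \<le> W n H x * real (card (P n))"
      using hh_sum_le[OF assms(1,2) True] by (intro mult_left_mono) (auto simp: W_def)
    also have "\<dots> \<le> (W n H x + 2 powr (- H / 2)) * real (card (P n))"
      using N by (intro mult_right_mono) auto
    finally show ?thesis .
  next
    case False
    have Wle: "W n H x \<le> 2 powr (- H / 2)"
      unfolding W_def using False by (intro powr_mono) auto
    have "W n H x * (\<Sum>ij\<in>P n. hh p (x (fst ij)) (x (snd ij))) \<le> W n H x * (2 * real (card (P n)))"
      using hh_sum_le2[OF assms(1)] by (intro mult_left_mono) (auto simp: W_def)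
    also have "\<dots> = (W n H x + W n H x) * real (card (P n))" by (simp add: algebra_simps)
    also have "\<dots> \<le> (W n H x + 2 powr (- H / 2)) * real (card (P n))"
      using N Wle by (intro mult_right_mono) auto
    finally show ?thesis .
  qed
  finally show ?thesis using N by (simp add: divide_le_eq)
qed

lemma main_bound:
  assumes "0 \<le> p" "p \<le> 1" "n \<ge> 2"
  shows "1 - stay p n {y. phi_up n y \<le> H} m x \<le> W n H x + real m * 2 powr (- H / 2)"
proof (induction m arbitrary: x)
  case 0
  then show ?case by (simp add: W_def)
next
  case (Suc m)
  let ?A = "{y. phi_up n y \<le> H}"
  let ?e = "2 powr (- H / 2)"
  have N: "real (card (P n)) > 0" using finite_P P_ne[OF assms(3)] by (simp add: card_gt_0_iff)
  show ?case
  proof (cases "x \<in> ?A")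
    case False
    then have "W n H x \<ge> 1" unfolding W_def by (intro ge_one_powr_ge_zero) auto
    moreover have "0 \<le> real (Suc m) * ?e" by simp
    moreover have "stay p n ?A (Suc m) x = 0" using False by simp
    ultimately show ?thesis by linarith
  next
    case True
    let ?D = "\<lambda>ij g. dexp p (x (fst ij)) (x (snd ij)) g"
    let ?u = "\<lambda>ij s. x(fst ij := s)"
    have st: "stay p n ?A (Suc m) x = (\<Sum>ij\<in>P n. ?D ij (\<lambda>s. stay p n ?A m (?u ij s))) / real (card (P n))"
      using True by (simp add: exp_step[OF assms])
    have "1 - stay p n ?A (Suc m) x = (\<Sum>ij\<in>P n. 1 - ?D ij (\<lambda>s. stay p n ?A m (?u ij s))) / real (card (P n))"
      unfolding st using N by (simp add: sum_subtractf diff_divide_distrib)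
    also have "\<dots> = (\<Sum>ij\<in>P n. ?D ij (\<lambda>s. 1 - stay p n ?A m (?u ij s))) / real (card (P n))"
      by (simp add: dexp_minus)
    also have "\<dots> \<le> (\<Sum>ij\<in>P n. ?D ij (\<lambda>s. W n H (?u ij s) + real m * ?e)) / real (card (P n))"
      using N by (intro divide_right_mono sum_mono dexp_mono assms Suc.IH) auto
    also have "\<dots> = (\<Sum>ij\<in>P n. ?D ij (\<lambda>s. W n H (?u ij s))) / real (card (P n)) + real m * ?e"
      using N by (simp add: dexp_plus sum.distrib add_divide_distrib)
    also have "\<dots> \<le> W n H x + ?e + real m * ?e"
      using step_W[OF assms, of x H] by simp
    finally show ?thesis by (simp add: algebra_simps)
  qed
qed


theorem lemma10:
  fixes p \<xi> :: real
  assumes "0 \<le> p" "p \<le> 1" "\<xi> > 0"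
  shows "\<exists>c>0. \<exists>g :: nat \<Rightarrow> nat.
           filterlim (\<lambda>n. real (g n) / (real n * (ln (real n))\<^sup>2)) at_top sequentially \<and>
           (\<forall>\<^sub>F n in sequentially. \<forall>x :: nat \<Rightarrow> st.
              phi_up n x < 2 * \<xi> * sqrt (real n * ln (real n)) \<longrightarrow>
              1 - stay p n {y. phi_up n y \<le> 6 * \<xi> * sqrt (real n * ln (real n))} (g n + 1) x
                \<le> real n powr (- c))"
proof (intro exI conjI)
  show "(1::real) > 0" by simp
  show "filterlim (\<lambda>n. real (n^3) / (real n * (ln (real n))\<^sup>2)) at_top sequentially"
    by real_asymp
  have ev1: "\<forall>\<^sub>F n in sequentially. 2 powr (- 2 * \<xi> * sqrt (real n * ln (real n))) + (real n ^ 3 + 1) * 2 powr (- 3 * \<xi> * sqrt (real n * ln (real n))) \<le> real n powr (-1)"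
    using assms(3) by real_asymp
  have ev2: "\<forall>\<^sub>F n in sequentially. n \<ge> (2::nat)" by (rule eventually_ge_at_top)
  show "\<forall>\<^sub>F n in sequentially. \<forall>x :: nat \<Rightarrow> st.
              phi_up n x < 2 * \<xi> * sqrt (real n * ln (real n)) \<longrightarrow>
              1 - stay p n {y. phi_up n y \<le> 6 * \<xi> * sqrt (real n * ln (real n))} (n^3 + 1) x
                \<le> real n powr (- 1)"
    using ev1 ev2
  proof eventually_elim
    case (elim n)
    show ?case
    proof (intro allI impI)
      fix x :: "nat \<Rightarrow> st"
      define s where "s = sqrt (real n * ln (real n))"
      assume "phi_up n x < 2 * \<xi> * sqrt (real n * ln (real n))"
      then have ph: "phi_up n x < 2 * \<xi> * s" by (simp add: s_def)
      have mb: "1 - stay p n {y. phi_up n y \<le> 6 * \<xi> * s} (n^3 + 1) x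
          \<le> W n (6 * \<xi> * s) x + real (n^3 + 1) * 2 powr (- (6 * \<xi> * s) / 2)"
        by (rule main_bound[OF assms(1,2) elim(2)])
      have w: "W n (6 * \<xi> * s) x \<le> 2 powr (- 2 * \<xi> * s)"
        unfolding W_def using ph by (intro powr_mono) auto
      have e: "- (6 * \<xi> * s) / 2 = - 3 * \<xi> * s" by simp
      have c: "real (n^3 + 1) = real n ^ 3 + 1" by simp
      have "1 - stay p n {y. phi_up n y \<le> 6 * \<xi> * s} (n^3 + 1) x
          \<le> 2 powr (- 2 * \<xi> * s) + (real n ^ 3 + 1) * 2 powr (- 3 * \<xi> * s)"
        using mb w unfolding e c by linarith
      also have "\<dots> \<le> real n powr (-1)" using elim(1) by (simp add: s_def)
      finally show "1 - stay p n {y. phi_up n y \<le> 6 * \<xi> * sqrt (real n * ln (real n))} (n^3 + 1) x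
                \<le> real n powr (- 1)" by (simp add: s_def)
    qed
  qed
qed

end
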